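(* Let $(\varphi_{s,t})$ be an evolution family of order $d\in[1,+\infty]$. Assume that for all $t\ge0$ the function $f_t:\mathbb D\to\mathbb C$ is univalent (holomorphic) and $f_t\circ\varphi_{s,t}=f_s$ for all $0\le s\le t<+\infty$. Then $(f_t)$ is a Loewner chain of order $d$.
   Context: $\mathbb D$ is the open unit disk. For $d\in[1,+\infty]$, an evolution family of order $d$ is a family $(\varphi_{s,t})_{0\le s\le t<+\infty}$ of holomorphic self-maps of $\mathbb D$ with $\varphi_{s,s}=\mathrm{id}_{\mathbb D}$, $\varphi_{s,t}=\varphi_{u,t}\circ\varphi_{s,u}$ for $0\le s\le u\le t$, and such that for every $z\in\mathbb D$, $T>0$ there is a non-negative $k_{z,T}\in L^d([0,T])$ with $|\varphi_{s,u}(z)-\varphi_{s,t}(z)|\le\int_u^tk_{z,T}$ for all $0\le s\le u\le t\le T$. A Loewner chain of order $d$ is a family $(f_t)_{t\ge0}$ of holomorphic maps $f_t:\mathbb D\to\mathbb C$ such that each $f_t$ is univalent, $f_s(\mathbb D)\subset f_t(\mathbb D)$ for all $0\le s<t$, and for every compact $K\subset\mathbb D$ and $T>0$ there is a non-negative $k_{K,T}\in L^d([0,T])$ with $|f_s(z)-f_t(z)|\le\int_s^tk_{K,T}$ for all $z\in K$, $0\le s\le t\le T$. *)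

theory Defs
  imports "HOL-Analysis.Analysis"
begin

definition Lp_on :: "ereal \<Rightarrow> real \<Rightarrow> (real \<Rightarrow> real) \<Rightarrow> bool" where
  "Lp_on d T k \<longleftrightarrow>
     k \<in> borel_measurable (lebesgue_on {0..T}) \<and>
     (if d = \<infinity> then (\<exists>C. AE x in lebesgue_on {0..T}. \<bar>k x\<bar> \<le> C)
      else integrable (lebesgue_on {0..T}) (\<lambda>x. \<bar>k x\<bar> powr real_of_ereal d))"

definition evolution_family ::
  "ereal \<Rightarrow> (real \<Rightarrow> real \<Rightarrow> complex \<Rightarrow> complex) \<Rightarrow> bool" where
  "evolution_family d \<phi> \<longleftrightarrow>
     (\<forall>s t. 0 \<le> s \<longrightarrow> s \<le> t \<longrightarrow>
        \<phi> s t holomorphic_on ball 0 1 \<and> \<phi> s t ` ball 0 1 \<subseteq> ball 0 1) \<and>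
     (\<forall>s\<ge>0. \<forall>z\<in>ball 0 1. \<phi> s s z = z) \<and>
     (\<forall>s u t. 0 \<le> s \<longrightarrow> s \<le> u \<longrightarrow> u \<le> t \<longrightarrow>
        (\<forall>z\<in>ball 0 1. \<phi> s t z = \<phi> u t (\<phi> s u z))) \<and>
     (\<forall>z\<in>ball 0 1. \<forall>T>0. \<exists>k. (\<forall>x. 0 \<le> k x) \<and> Lp_on d T k \<and>
        (\<forall>s u t. 0 \<le> s \<longrightarrow> s \<le> u \<longrightarrow> u \<le> t \<longrightarrow> t \<le> T \<longrightarrow>
           cmod (\<phi> s u z - \<phi> s t z) \<le> integral {u..t} k))"

definition loewner_chain ::
  "ereal \<Rightarrow> (real \<Rightarrow> complex \<Rightarrow> complex) \<Rightarrow> bool" where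
  "loewner_chain d f \<longleftrightarrow>
     (\<forall>t\<ge>0. f t holomorphic_on ball 0 1 \<and> inj_on (f t) (ball 0 1)) \<and>
     (\<forall>s t. 0 \<le> s \<longrightarrow> s < t \<longrightarrow> f s ` ball 0 1 \<subseteq> f t ` ball 0 1) \<and>
     (\<forall>K T. compact K \<longrightarrow> K \<subseteq> ball 0 1 \<longrightarrow> T > 0 \<longrightarrow>
        (\<exists>k. (\<forall>x. 0 \<le> k x) \<and> Lp_on d T k \<and>
          (\<forall>z\<in>K. \<forall>s t. 0 \<le> s \<longrightarrow> s \<le> t \<longrightarrow> t \<le> T \<longrightarrow>
             cmod (f s z - f t z) \<le> integral {s..t} k)))"

end

theory Submission
  imports Defs "HOL-Complex_Analysis.Complex_Analysis"
begin


definition mob :: "complex \<Rightarrow> complex \<Rightarrow> complex" where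
  "mob a z = (z - a) / (1 - cnj a * z)"

lemma mob_den_nz: "norm a < 1 \<Longrightarrow> norm z < 1 \<Longrightarrow> 1 - cnj a * z \<noteq> 0"
  by (metis complex_mod_cnj less_irrefl mult.commute mult_1 norm_mult_less norm_one right_minus_eq)

lemma mob_eq: "mob a = Moebius_function 0 a"
  by (auto simp: fun_eq_iff mob_def Moebius_function_simple)

lemma mob_norm: "norm a < 1 \<Longrightarrow> norm z < 1 \<Longrightarrow> norm (mob a z) < 1"
  by (simp add: mob_eq Moebius_function_norm_lt_1)

lemma mob_holo: "norm a < 1 \<Longrightarrow> mob a holomorphic_on ball 0 1"
  by (simp add: mob_eq Moebius_function_holomorphic)

lemma mob_inv: "norm a < 1 \<Longrightarrow> norm z < 1 \<Longrightarrow> mob (-a) (mob a z) = z"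
  unfolding mob_eq by (rule Moebius_function_compose) auto

lemma mob_inv': "norm a < 1 \<Longrightarrow> norm z < 1 \<Longrightarrow> mob a (mob (-a) z) = z"
  using mob_inv[of "-a" z] by simp

lemma mob_self: "mob a a = 0" by (simp add: mob_def)
lemma mob_zero: "mob a 0 = - a" by (simp add: mob_def)

lemma mob_identity:
  assumes "norm a < 1" "norm z < 1"
  shows "1 - norm (mob a z) ^ 2 = (1 - norm a ^ 2) * (1 - norm z ^ 2) / norm (1 - cnj a * z) ^ 2"
proof -
  have "1 - cnj a * z \<noteq> 0" using mob_den_nz assms by blast
  then show ?thesis
    apply (cases a)
    apply (cases z)
    apply (simp add: mob_def divide_simps norm_divide norm_mult)
    apply (simp add: complex_norm complex_diff complex_mult one_complex.code complex_cnj)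
    apply (auto simp: algebra_simps power2_eq_square)
    done
qed

lemma mob_norm_le:
  assumes a: "norm a < 1" and z: "norm z < 1"
  shows "norm (mob a z) \<le> (norm z + norm a) / (1 + norm a * norm z)"
proof -
  define D where "D = norm (1 - cnj a * z)"
  define E where "E = 1 + norm a * norm z"
  have Dpos: "D > 0" using mob_den_nz[OF a z] by (simp add: D_def)
  have DE: "D \<le> E" unfolding D_def E_def
    using norm_triangle_ineq4[of 1 "cnj a * z"] by (simp add: norm_mult)
  have Epos: "E > 0" by (simp add: E_def add_pos_nonneg)
  have p: "0 \<le> (1 - norm a ^ 2) * (1 - norm z ^ 2)"
    using a z by (simp add: abs_square_less_1 less_imp_le)
  have DE2: "D^2 \<le> E^2" using Dpos DE by (intro power_mono) auto
  have DE3: "0 < E^2 * D^2" using Dpos Epos by simp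
  have "(1 - norm a ^ 2) * (1 - norm z ^ 2) / E^2 \<le> (1 - norm a ^ 2) * (1 - norm z ^ 2) / D^2"
    by (rule divide_left_mono[OF DE2 p DE3])
  also have "\<dots> = 1 - norm (mob a z) ^ 2" using mob_identity[OF a z] by (simp add: D_def)
  finally have 1: "norm (mob a z) ^ 2 \<le> 1 - (1 - norm a ^ 2) * (1 - norm z ^ 2) / E^2" by linarith
  have n: "E^2 - (1 - norm a ^ 2) * (1 - norm z ^ 2) = (norm z + norm a)^2"
    by (simp add: E_def power2_eq_square algebra_simps)
  have "1 - (1 - norm a ^ 2) * (1 - norm z ^ 2) / E^2 = (E^2 - (1 - norm a ^ 2) * (1 - norm z ^ 2)) / E^2"
    using Epos by (simp add: diff_divide_distrib)
  then have 2: "1 - (1 - norm a ^ 2) * (1 - norm z ^ 2) / E^2 = ((norm z + norm a) / E)^2"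
    by (simp only: n power_divide)
  have "norm (mob a z) ^ 2 \<le> ((norm z + norm a) / E)^2" using 1 2 by linarith
  then have "norm (mob a z) \<le> (norm z + norm a) / E"
    by (rule power2_le_imp_le) (intro divide_nonneg_pos add_nonneg_nonneg norm_ge_zero Epos)
  then show ?thesis by (simp add: E_def)
qed

lemma pick:
  assumes g: "g holomorphic_on ball 0 1" "g ` ball 0 1 \<subseteq> ball 0 1"
    and x: "norm x < 1" and y: "norm y < 1"
  shows "norm (mob (g y) (g x)) \<le> norm (mob y x)"
proof -
  have gin: "\<And>w. norm w < 1 \<Longrightarrow> norm (g w) < 1" using g by (auto simp: image_subset_iff mem_ball_0)
  have gy: "norm (g y) < 1" using gin y by blast
  define ch where "ch = (\<lambda>w. mob (g y) (g (mob (-y) w)))"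
  have mm: "mob (-y) ` ball 0 1 \<subseteq> ball 0 1" using mob_norm[of "-y"] y by auto
  have "ch holomorphic_on ball 0 1" unfolding ch_def
  proof (rule holomorphic_on_compose_gen[where g="mob (g y)" and t="ball 0 1", unfolded o_def])
    show "(\<lambda>w. g (mob (- y) w)) holomorphic_on ball 0 1"
    proof -
      have mh: "mob (-y) holomorphic_on ball 0 1" using mob_holo y by simp
      show ?thesis using holomorphic_on_compose_gen[OF mh g(1) mm] by (simp add: o_def)
    qed
    show "mob (g y) holomorphic_on ball 0 1" using mob_holo gy by blast
    show "(\<lambda>w. g (mob (- y) w)) ` ball 0 1 \<subseteq> ball 0 1"
      using mm g(2) unfolding image_subset_iff by blast
  qed
  moreover have "ch 0 = 0" by (simp add: ch_def mob_zero mob_self)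
  moreover have "\<And>w. norm w < 1 \<Longrightarrow> norm (ch w) < 1"
    unfolding ch_def by (intro mob_norm gy gin) (use mm y in \<open>auto simp: image_subset_iff mem_ball_0\<close>)
  moreover have "norm (mob y x) < 1" using mob_norm x y by blast
  ultimately have "norm (ch (mob y x)) \<le> norm (mob y x)" by (rule Schwarz_Lemma(1))
  then show ?thesis by (simp add: ch_def mob_inv x y)
qed

lemma frac_mono:
  fixes m z c :: real
  assumes "0 \<le> m" "m \<le> z" "0 \<le> c" "c < 1"
  shows "(m + c) / (1 + c * m) \<le> (z + c) / (1 + c * z)"
proof -
  have p1: "1 + c * m > 0" "1 + c * z > 0" using assms by (auto intro: add_pos_nonneg)
  have "(m + c) * (1 + c * z) \<le> (z + c) * (1 + c * m)"
  proof -
    have "(z + c) * (1 + c * m) - (m + c) * (1 + c * z) = (z - m) * (1 - c*c)"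
      by (simp add: algebra_simps)
    moreover have "(z - m) * (1 - c*c) \<ge> 0" using assms by (intro mult_nonneg_nonneg) (auto simp: mult_le_one)
    ultimately show ?thesis by linarith
  qed
  then show ?thesis using p1 by (simp add: divide_simps)
qed

lemma frac_lt1:
  fixes z c :: real
  assumes "0 \<le> z" "z < 1" "0 \<le> c" "c < 1"
  shows "(z + c) / (1 + c * z) < 1"
proof -
  have "1 + c * z > 0" using assms by (auto intro: add_pos_nonneg)
  moreover have "z + c < 1 + c * z"
  proof -
    have "(1 + c * z) - (z + c) = (1 - z) * (1 - c)" by (simp add: algebra_simps)
    moreover have "(1 - z) * (1 - c) > 0" using assms by simp
    ultimately show ?thesis by linarith
  qed
  ultimately show ?thesis by simp
qed

lemma growth:
  assumes g: "g holomorphic_on ball 0 1" "g ` ball 0 1 \<subseteq> ball 0 1"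
    and z: "norm z < 1"
  shows "norm (g z) \<le> (norm z + norm (g 0)) / (1 + norm (g 0) * norm z)"
proof -
  have gin: "\<And>w. norm w < 1 \<Longrightarrow> norm (g w) < 1" using g by (auto simp: image_subset_iff mem_ball_0)
  define c where "c = g 0"
  have c: "norm c < 1" using gin c_def by simp
  define m where "m = mob c (g z)"
  have m: "norm m \<le> norm z" using pick[OF g z, of 0] by (simp add: m_def c_def mob_def)
  have m1: "norm m < 1" unfolding m_def using mob_norm c gin z by blast
  have "g z = mob (-c) m" using mob_inv c gin z m_def by auto
  then have "norm (g z) \<le> (norm m + norm c) / (1 + norm c * norm m)"
    using mob_norm_le[of "-c" m] c m1 by simp
  also have "\<dots> \<le> (norm z + norm c) / (1 + norm c * norm z)"
    by (rule frac_mono) (use m c in auto)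
  finally show ?thesis by (simp add: c_def)
qed

lemma lip:
  assumes g: "g holomorphic_on ball 0 1" "g ` ball 0 1 \<subseteq> ball 0 1"
    and x: "norm x \<le> \<rho>" and y: "norm y \<le> \<rho>" and \<rho>: "\<rho> < 1"
  shows "norm (g x - g y) \<le> 2 * norm (x - y) / (1 - \<rho>)"
proof -
  have gin: "\<And>w. norm w < 1 \<Longrightarrow> norm (g w) < 1" using g by (auto simp: image_subset_iff mem_ball_0)
  have x1: "norm x < 1" and y1: "norm y < 1" using x y \<rho> by auto
  have gx: "norm (g x) < 1" and gy: "norm (g y) < 1" using gin x1 y1 by auto
  have P: "norm (mob (g y) (g x)) \<le> norm (mob y x)" by (rule pick[OF g x1 y1])
  have d1: "1 - cnj (g y) * g x \<noteq> 0" using mob_den_nz gx gy by blast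
  have d2: "1 - cnj y * x \<noteq> 0" using mob_den_nz x1 y1 by blast
  have "norm (cnj y * x) \<le> \<rho>"
  proof -
    have "norm (cnj y * x) = norm y * norm x" by (simp add: norm_mult)
    also have "\<dots> \<le> 1 * \<rho>" by (rule mult_mono) (use x y1 in auto)
    finally show ?thesis by simp
  qed
  then have D2: "norm (1 - cnj y * x) \<ge> 1 - \<rho>"
    using norm_triangle_ineq2[of 1 "cnj y * x"] by simp
  have "norm (cnj (g y) * g x) \<le> 1" using gx gy by (simp add: norm_mult mult_le_one less_imp_le)
  then have D1: "norm (1 - cnj (g y) * g x) \<le> 2"
    using norm_triangle_ineq4[of 1 "cnj (g y) * g x"] by simp
  have "norm (g x - g y) = norm (mob (g y) (g x)) * norm (1 - cnj (g y) * g x)"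
    using d1 by (simp add: mob_def norm_divide)
  also have "\<dots> \<le> norm (mob y x) * 2"
    by (rule mult_mono[OF P D1]) auto
  also have "norm (mob y x) = norm (x - y) / norm (1 - cnj y * x)"
    by (simp add: mob_def norm_divide)
  also have "norm (x - y) / norm (1 - cnj y * x) \<le> norm (x - y) / (1 - \<rho>)"
    by (rule divide_left_mono) (use D2 \<rho> in \<open>auto intro!: mult_pos_pos\<close>)
  finally have "norm (g x - g y) \<le> norm (x - y) / (1 - \<rho>) * 2" by simp
  then show ?thesis by (simp add: mult.commute)
qed

lemma harn:
  assumes x: "norm x < 1" and y: "norm y < 1" and d: "norm (mob y x) \<le> \<delta>" "\<delta> < 1"
  shows "norm (1 - x) \<le> (1 + \<delta>) / (1 - \<delta>) * norm (1 - y)"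
proof -
  have d2: "1 - cnj y * x \<noteq> 0" using mob_den_nz x y by blast
  have "norm (x - y) = norm (mob y x) * norm (1 - cnj y * x)"
    using d2 by (simp add: mob_def norm_divide)
  also have "\<dots> \<le> \<delta> * norm (1 - cnj y * x)" by (intro mult_right_mono d) auto
  finally have 1: "norm (x - y) \<le> \<delta> * norm (1 - cnj y * x)" .
  have "norm (1 - cnj y * x) = norm ((1 - cnj y) + cnj y * (1 - x))" by (simp add: algebra_simps)
  also have "\<dots> \<le> norm (1 - cnj y) + norm (cnj y * (1 - x))" by (rule norm_triangle_ineq)
  also have "norm (1 - cnj y) = norm (1 - y)"
  proof -
    have "1 - cnj y = cnj (1 - y)" by simp
    then show ?thesis by (simp only: complex_mod_cnj)
  qed
  also have "norm (cnj y * (1 - x)) \<le> norm (1 - x)"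
    using y by (simp add: norm_mult mult_left_le_one_le less_imp_le)
  finally have 2: "norm (1 - cnj y * x) \<le> norm (1 - y) + norm (1 - x)" by simp
  have 3: "norm (1 - x) \<le> norm (1 - y) + norm (x - y)"
    using norm_triangle_ineq4[of "1 - y" "x - y"] by simp
  have \<delta>0: "\<delta> \<ge> 0" using d(1) norm_ge_zero order_trans by blast
  have 4: "\<delta> * norm (1 - cnj y * x) \<le> \<delta> * (norm (1 - y) + norm (1 - x))"
    by (rule mult_left_mono[OF 2 \<delta>0])
  have "norm (1 - x) \<le> norm (1 - y) + \<delta> * (norm (1 - y) + norm (1 - x))"
    using 1 3 4 by linarith
  then have "(1 - \<delta>) * norm (1 - x) \<le> (1 + \<delta>) * norm (1 - y)" by (simp add: algebra_simps)
  then show ?thesis using d(2) by (simp add: divide_simps mult.commute)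
qed

lemma mob_close:
  assumes c: "norm c \<le> 1/2" and w: "norm w < 1"
  shows "norm (mob c w - w) \<le> 4 * norm c"
proof -
  have c1: "norm c < 1" using c by simp
  have d: "1 - cnj c * w \<noteq> 0" using mob_den_nz c1 w by blast
  have e: "mob c w - w = (cnj c * w^2 - c) / (1 - cnj c * w)"
    using d by (simp add: mob_def field_simps power2_eq_square)
  have "norm (cnj c * w) \<le> 1/2" using c w
    using mult_mono[of "norm c" "1/2" "norm w" 1] by (simp add: norm_mult)
  then have den: "norm (1 - cnj c * w) \<ge> 1/2"
    using norm_triangle_ineq2[of 1 "cnj c * w"] by simp
  have "norm (cnj c * w^2 - c) \<le> norm (cnj c * w^2) + norm c" by (rule norm_triangle_ineq4)
  also have "norm (cnj c * w^2) \<le> norm c"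
  proof -
    have "norm w ^ 2 \<le> 1" using w by (simp add: power_le_one less_imp_le)
    then show ?thesis by (simp add: norm_mult norm_power mult_left_le)
  qed
  finally have num: "norm (cnj c * w^2 - c) \<le> 2 * norm c" by simp
  have "norm (mob c w - w) = norm (cnj c * w^2 - c) / norm (1 - cnj c * w)"
    by (simp add: e norm_divide)
  also have "\<dots> \<le> (2 * norm c) / (1/2)"
    by (intro frac_le num den) auto
  finally show ?thesis by simp
qed



lemma nearid:
  fixes r :: real assumes r: "r < 1"
  obtains C where "C \<ge> 0" "\<And>g z. g holomorphic_on ball 0 1 \<Longrightarrow> g ` ball 0 1 \<subseteq> ball 0 1 \<Longrightarrow>
     norm z \<le> r \<Longrightarrow> norm (g z - z) \<le> C * (norm (g 0) + norm (g (1/2) - 1/2))"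
proof -
  define r0 where "r0 = max r 0"
  have r0: "0 \<le> r0" "r0 < 1" using r by (auto simp: r0_def)
  define \<delta> where "\<delta> = (r0 + 1/2) / (1 + 1/2 * r0)"
  have \<delta>1: "\<delta> < 1" unfolding \<delta>_def by (rule frac_lt1) (use r0 in auto)
  have \<delta>0: "\<delta> \<ge> 0" unfolding \<delta>_def using r0 by auto
  define K where "K = (1 + \<delta>) / (1 - \<delta>)"
  have K1: "K \<ge> 1" using \<delta>0 \<delta>1 by (simp add: K_def)
  define C where "C = 4 + 10 * K"
  have C0: "C \<ge> 0" using K1 by (simp add: C_def)
  have Cb: "4 * a + K * (2 * (4 * a + e)) \<le> C * (a + e)" if "a \<ge> 0" "e \<ge> 0" for a e
  proof -
    have "C * (a + e) - (4 * a + K * (2 * (4 * a + e))) = 4 * e + 2 * K * a + 8 * K * e"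
      by (simp add: C_def algebra_simps)
    moreover have "4 * e + 2 * K * a + 8 * K * e \<ge> 0" using that K1 by simp
    ultimately show ?thesis by linarith
  qed
  have main: "norm (g z - z) \<le> C * (norm (g 0) + norm (g (1/2) - 1/2))"
    if g: "g holomorphic_on ball 0 1" "g ` ball 0 1 \<subseteq> ball 0 1" and z: "norm z \<le> r" for g z
  proof -
    have gin: "\<And>w. norm w < 1 \<Longrightarrow> norm (g w) < 1" using g by (auto simp: image_subset_iff mem_ball_0)
    have z1: "norm z < 1" using z r by simp
    have zr0: "norm z \<le> r0" using z by (simp add: r0_def)
    define c where "c = g 0"
    define e where "e = norm (g (1/2) - 1/2)"
    have e0: "e \<ge> 0" by (simp add: e_def)
    show ?thesis
    proof (cases "norm c \<ge> 1/2")
      case True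
      have "norm (g z - z) \<le> norm (g z) + norm z" by (rule norm_triangle_ineq4)
      also have "\<dots> \<le> 2" using gin[OF z1] z1 by simp
      also have "\<dots> \<le> 4 * norm c" using True by simp
      also have "\<dots> \<le> 4 * norm c + K * (2 * (4 * norm c + e))" using K1 e0 by simp
      also have "\<dots> \<le> C * (norm c + e)" by (rule Cb) (use e0 in auto)
      finally show ?thesis by (simp add: c_def e_def)
    next
      case False
      then have c2: "norm c \<le> 1/2" "norm c < 1" by auto
      define \<psi> where "\<psi> = (\<lambda>w. mob c (g w))"
      have hol\<psi>: "\<psi> holomorphic_on ball 0 1" unfolding \<psi>_def
        by (rule holomorphic_on_compose_gen[where t="ball 0 1", unfolded o_def])
          (use g mob_holo c2 in auto)
      have \<psi>0: "\<psi> 0 = 0" by (simp add: \<psi>_def c_def mob_self)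
      have \<psi>1: "\<And>w. norm w < 1 \<Longrightarrow> norm (\<psi> w) < 1" unfolding \<psi>_def using mob_norm c2 gin by blast
      obtain h where holh: "h holomorphic_on ball 0 1" and hh: "\<And>w. norm w < 1 \<Longrightarrow> \<psi> w = w * h w"
        and dh: "deriv \<psi> 0 = h 0"
        using Schwarz3[OF hol\<psi> \<psi>0] by blast
      have hle: "norm (h w) \<le> 1" if w: "norm w < 1" for w
      proof (cases "w = 0")
        case True
        then show ?thesis using Schwarz_Lemma(2)[OF hol\<psi> \<psi>0 \<psi>1 w] dh by simp
      next
        case False
        have "norm (w * h w) \<le> norm w" using Schwarz_Lemma(1)[OF hol\<psi> \<psi>0 \<psi>1 w] hh[OF w] by simp
        then show ?thesis using False by (simp add: norm_mult)
      qed
      have half: "norm (1/2 :: complex) < 1" by simp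
      have KK: "norm (1 - h z) \<le> K * norm (1 - h (1/2))"
      proof (cases "\<exists>w. norm w < 1 \<and> norm (h w) = 1")
        case True
        then obtain w where w: "norm w < 1" "norm (h w) = 1" by blast
        have "h constant_on ball 0 1"
        proof (rule Schwarz2[OF holh])
          show "0 < 1 - norm w" using w by simp
          show "ball w (1 - norm w) \<subseteq> ball 0 1"
            by (simp add: ball_subset_ball_iff)
          show "norm (h z') \<le> norm (h w)" if "norm (w - z') < 1 - norm w" for z'
          proof -
            have "norm z' \<le> norm w + norm (w - z')"
              using norm_triangle_ineq4[of w "w - z'"] by simp
            then have "norm z' < 1" using that by simp
            then show ?thesis using hle w by simp
          qed
        qed
        then obtain y0 where "\<forall>x\<in>ball 0 1. h x = y0" unfolding constant_on_def by blast
        then have "h z = h (1/2)" using z1 half by (simp add: mem_ball_0)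
        then show ?thesis using K1 by (simp add: mult_le_cancel_right1)
      next
        case False
        have hin: "norm (h w) < 1" if "norm w < 1" for w
        proof -
          have "norm (h w) \<noteq> 1" using False that by blast
          then show ?thesis using hle[OF that] by simp
        qed
        then have hs: "h ` ball 0 1 \<subseteq> ball 0 1" by (auto simp: mem_ball_0)
        have "norm (mob (h (1/2)) (h z)) \<le> norm (mob (1/2) z)"
          by (rule pick[OF holh hs z1 half])
        also have "\<dots> \<le> (norm z + 1/2) / (1 + 1/2 * norm z)"
          using mob_norm_le[OF half z1] by simp
        also have "\<dots> \<le> \<delta>" unfolding \<delta>_def by (rule frac_mono) (use zr0 in auto)
        finally have "norm (mob (h (1/2)) (h z)) \<le> \<delta>" .
        then show ?thesis unfolding K_def by (rule harn[OF hin[OF z1] hin[OF half] _ \<delta>1])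
      qed
      have A: "norm (\<psi> z - z) \<le> norm (1 - h z)"
      proof -
        have "\<psi> z - z = z * (h z - 1)" using hh[OF z1] by (simp add: algebra_simps)
        then have "norm (\<psi> z - z) = norm z * norm (1 - h z)" by (simp add: norm_mult norm_minus_commute)
        also have "\<dots> \<le> 1 * norm (1 - h z)" using z1 by (intro mult_right_mono) auto
        finally show ?thesis by simp
      qed
      have B: "norm (1 - h (1/2)) = 2 * norm (\<psi> (1/2) - 1/2)"
      proof -
        have "\<psi> (1/2) - 1/2 = - (1/2) * (1 - h (1/2))" using hh[OF half] by (simp add: algebra_simps)
        then show ?thesis by (simp add: norm_mult)
      qed
      have Cc: "norm (\<psi> (1/2) - 1/2) \<le> 4 * norm c + e"
      proof -
        have "\<psi> (1/2) - 1/2 = (mob c (g (1/2)) - g (1/2)) + (g (1/2) - 1/2)" by (simp add: \<psi>_def)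
        then have "norm (\<psi> (1/2) - 1/2) \<le> norm (mob c (g (1/2)) - g (1/2)) + e"
          unfolding e_def by (simp only: norm_triangle_ineq)
        moreover have "norm (mob c (g (1/2)) - g (1/2)) \<le> 4 * norm c"
          by (rule mob_close[OF c2(1) gin[OF half]])
        ultimately show ?thesis by simp
      qed
      have gz: "g z = mob (-c) (\<psi> z)" unfolding \<psi>_def using mob_inv c2 gin z1 by auto
      have D: "norm (mob (-c) (\<psi> z) - \<psi> z) \<le> 4 * norm c"
        using mob_close[of "-c" "\<psi> z"] c2 \<psi>1[OF z1] by simp
      have "g z - z = (mob (-c) (\<psi> z) - \<psi> z) + (\<psi> z - z)" using gz by simp
      then have "norm (g z - z) \<le> norm (mob (-c) (\<psi> z) - \<psi> z) + norm (\<psi> z - z)"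
        by (simp only: norm_triangle_ineq)
      also have "\<dots> \<le> 4 * norm c + K * (2 * (4 * norm c + e))"
      proof -
        have "norm (\<psi> z - z) \<le> K * (2 * (4 * norm c + e))"
          using A KK B mult_left_mono[OF Cc, of "2*K"] K1 by (simp add: algebra_simps)
        then show ?thesis using D by linarith
      qed
      also have "\<dots> \<le> C * (norm c + e)" by (rule Cb) (use e0 in auto)
      finally show ?thesis by (simp add: c_def e_def)
    qed
  qed
  show ?thesis by (rule that[OF C0 main])
qed



lemma Lp_integrable:
  assumes "Lp_on d T k" "1 \<le> d"
  shows "integrable (lebesgue_on {0..T}) k"
proof -
  have meas: "k \<in> borel_measurable (lebesgue_on {0..T})" using assms(1) by (simp add: Lp_on_def)
  show ?thesis
  proof (cases "d = \<infinity>")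
    case True
    then obtain C where C: "AE x in lebesgue_on {0..T}. \<bar>k x\<bar> \<le> C" using assms(1) by (auto simp: Lp_on_def)
    show ?thesis
    proof (rule Bochner_Integration.integrable_bound[OF _ meas])
      show "integrable (lebesgue_on {0..T}) (\<lambda>x. C)" by simp
      show "AE x in lebesgue_on {0..T}. norm (k x) \<le> norm C"
        using C by eventually_elim auto
    qed
  next
    case False
    define p where "p = real_of_ereal d"
    have p1: "p \<ge> 1" using assms(2) False unfolding p_def
      by (cases d) auto
    have I: "integrable (lebesgue_on {0..T}) (\<lambda>x. \<bar>k x\<bar> powr p)"
      using assms(1) False by (simp add: Lp_on_def p_def)
    show ?thesis
    proof (rule Bochner_Integration.integrable_bound[OF _ meas])
      show "integrable (lebesgue_on {0..T}) (\<lambda>x. 1 + \<bar>k x\<bar> powr p)"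
        using I by simp
      show "AE x in lebesgue_on {0..T}. norm (k x) \<le> norm (1 + \<bar>k x\<bar> powr p)"
      proof (rule AE_I2)
        fix x
        have "\<bar>k x\<bar> \<le> 1 + \<bar>k x\<bar> powr p"
        proof (cases "\<bar>k x\<bar> \<le> 1")
          case True then show ?thesis by (smt (verit) powr_ge_zero)
        next
          case False
          then have "\<bar>k x\<bar> powr 1 \<le> \<bar>k x\<bar> powr p" using p1 by (intro powr_mono) auto
          then show ?thesis using False by simp
        qed
        then show "norm (k x) \<le> norm (1 + \<bar>k x\<bar> powr p)" by simp
      qed
    qed
  qed
qed

lemma Lp_integrable_on:
  assumes "Lp_on d T k" "1 \<le> d"
  shows "k integrable_on {0..T}"
  using integrable_on_lebesgue_on[OF Lp_integrable[OF assms]] by simp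

lemma powr_sum_le:
  fixes a b p :: real
  assumes "0 \<le> a" "0 \<le> b" "0 \<le> p"
  shows "(a + b) powr p \<le> 2 powr p * (a powr p + b powr p)"
proof -
  have "(a + b) powr p \<le> (2 * max a b) powr p" using assms by (intro powr_mono2) auto
  also have "\<dots> = 2 powr p * max a b powr p" using assms by (simp add: powr_mult)
  also have "max a b powr p \<le> a powr p + b powr p"
    by (cases "a \<le> b") (auto simp: max_def)
  finally show ?thesis by simp
qed

lemma Lp_comb:
  assumes k1: "Lp_on d T k1" and k2: "Lp_on d T k2" and d: "1 \<le> d"
    and n1: "\<And>x. 0 \<le> k1 x" and n2: "\<And>x. 0 \<le> k2 x" and L: "0 \<le> L"
  shows "Lp_on d T (\<lambda>x. L * (k1 x + k2 x))"
proof -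
  have m1: "k1 \<in> borel_measurable (lebesgue_on {0..T})" using k1 by (simp add: Lp_on_def)
  have m2: "k2 \<in> borel_measurable (lebesgue_on {0..T})" using k2 by (simp add: Lp_on_def)
  have meas: "(\<lambda>x. L * (k1 x + k2 x)) \<in> borel_measurable (lebesgue_on {0..T})"
    using m1 m2 by measurable
  show ?thesis
  proof (cases "d = \<infinity>")
    case True
    obtain C1 where C1: "AE x in lebesgue_on {0..T}. \<bar>k1 x\<bar> \<le> C1" using k1 True by (auto simp: Lp_on_def)
    obtain C2 where C2: "AE x in lebesgue_on {0..T}. \<bar>k2 x\<bar> \<le> C2" using k2 True by (auto simp: Lp_on_def)
    have "AE x in lebesgue_on {0..T}. \<bar>L * (k1 x + k2 x)\<bar> \<le> L * (C1 + C2)"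
      using C1 C2
    proof eventually_elim
      case (elim x)
      then show ?case using n1[of x] n2[of x] L by (simp add: abs_mult mult_left_mono)
    qed
    then show ?thesis using meas True by (auto simp: Lp_on_def)
  next
    case False
    define p where "p = real_of_ereal d"
    have p1: "p \<ge> 1" using d False unfolding p_def by (cases d) auto
    have I1: "integrable (lebesgue_on {0..T}) (\<lambda>x. \<bar>k1 x\<bar> powr p)"
      using k1 False by (simp add: Lp_on_def p_def)
    have I2: "integrable (lebesgue_on {0..T}) (\<lambda>x. \<bar>k2 x\<bar> powr p)"
      using k2 False by (simp add: Lp_on_def p_def)
    have "integrable (lebesgue_on {0..T}) (\<lambda>x. \<bar>L * (k1 x + k2 x)\<bar> powr p)"
    proof (rule Bochner_Integration.integrable_bound)
      show "integrable (lebesgue_on {0..T}) (\<lambda>x. L powr p * (2 powr p * (\<bar>k1 x\<bar> powr p + \<bar>k2 x\<bar> powr p)))"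
        using I1 I2 by simp
      show "(\<lambda>x. \<bar>L * (k1 x + k2 x)\<bar> powr p) \<in> borel_measurable (lebesgue_on {0..T})"
        using meas by measurable
      show "AE x in lebesgue_on {0..T}. norm (\<bar>L * (k1 x + k2 x)\<bar> powr p)
          \<le> norm (L powr p * (2 powr p * (\<bar>k1 x\<bar> powr p + \<bar>k2 x\<bar> powr p)))"
      proof (rule AE_I2)
        fix x
        have a: "\<bar>L * (k1 x + k2 x)\<bar> powr p = L powr p * (k1 x + k2 x) powr p"
          using n1[of x] n2[of x] L by (simp add: abs_mult powr_mult)
        have b: "(k1 x + k2 x) powr p \<le> 2 powr p * (\<bar>k1 x\<bar> powr p + \<bar>k2 x\<bar> powr p)"
          using powr_sum_le[of "k1 x" "k2 x" p] n1[of x] n2[of x] p1 by simp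
        have "\<bar>L * (k1 x + k2 x)\<bar> powr p \<le> L powr p * (2 powr p * (\<bar>k1 x\<bar> powr p + \<bar>k2 x\<bar> powr p))"
          unfolding a by (rule mult_left_mono[OF b]) simp
        then show "norm (\<bar>L * (k1 x + k2 x)\<bar> powr p)
          \<le> norm (L powr p * (2 powr p * (\<bar>k1 x\<bar> powr p + \<bar>k2 x\<bar> powr p)))"
          by simp
      qed
    qed
    then show ?thesis using meas False by (simp add: Lp_on_def p_def)
  qed
qed

lemma small_integral:
  fixes k :: "real \<Rightarrow> real"
  assumes k: "k integrable_on {0..T}" and e: "e > 0"
  obtains \<delta> where "\<delta> > 0" "\<And>s t. 0 \<le> s \<Longrightarrow> s \<le> t \<Longrightarrow> t \<le> T \<Longrightarrow> t - s \<le> \<delta> \<Longrightarrow> integral {s..t} k \<le> e"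
proof -
  define F where "F = (\<lambda>x. integral {0..x} k)"
  have "continuous_on {0..T} F" unfolding F_def by (rule indefinite_integral_continuous_1[OF k])
  then have "uniformly_continuous_on {0..T} F" by (simp add: compact_uniformly_continuous)
  then obtain d where d: "d > 0" "\<And>x x'. x \<in> {0..T} \<Longrightarrow> x' \<in> {0..T} \<Longrightarrow> dist x' x < d \<Longrightarrow> dist (F x') (F x) < e"
    using e unfolding uniformly_continuous_on_def by metis
  show ?thesis
  proof (rule that[of "d/2"])
    show "d/2 > 0" using d by simp
    fix s t assume st: "0 \<le> s" "s \<le> t" "t \<le> T" "t - s \<le> d/2"
    have kt: "k integrable_on {0..t}" by (rule integrable_on_subinterval[OF k]) (use st in auto)
    have "integral {0..s} k + integral {s..t} k = integral {0..t} k"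
      by (rule Henstock_Kurzweil_Integration.integral_combine[OF st(1,2) kt])
    then have "integral {s..t} k = F t - F s" by (simp add: F_def)
    moreover have "dist (F t) (F s) < e" by (rule d(2)) (use st d in \<open>auto simp: dist_real_def\<close>)
    ultimately show "integral {s..t} k \<le> e" by (simp add: dist_real_def)
  qed
qed



lemma uniform_radius:
  fixes \<phi> :: "real \<Rightarrow> real \<Rightarrow> complex \<Rightarrow> complex"
  assumes E1: "\<And>s t. 0 \<le> s \<Longrightarrow> s \<le> t \<Longrightarrow> \<phi> s t holomorphic_on ball 0 1 \<and> \<phi> s t ` ball 0 1 \<subseteq> ball 0 1"
  and E2: "\<And>s z. 0 \<le> s \<Longrightarrow> z \<in> ball 0 1 \<Longrightarrow> \<phi> s s z = z"
  and E3: "\<And>s u t z. 0 \<le> s \<Longrightarrow> s \<le> u \<Longrightarrow> u \<le> t \<Longrightarrow> z \<in> ball 0 1 \<Longrightarrow> \<phi> s t z = \<phi> u t (\<phi> s u z)"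
  and k0: "k0 integrable_on {0..T}"
  and b0: "\<And>s t. 0 \<le> s \<Longrightarrow> s \<le> t \<Longrightarrow> t \<le> T \<Longrightarrow> norm (\<phi> s t 0) \<le> integral {s..t} k0"
  and r: "r < 1"
  obtains R where "R < 1" "\<And>s t z. 0 \<le> s \<Longrightarrow> s \<le> t \<Longrightarrow> t \<le> T \<Longrightarrow> norm z \<le> r \<Longrightarrow> norm (\<phi> s t z) \<le> R"
proof -
  obtain \<delta> where \<delta>: "\<delta> > 0" and sm: "\<And>s t. 0 \<le> s \<Longrightarrow> s \<le> t \<Longrightarrow> t \<le> T \<Longrightarrow> t - s \<le> \<delta> \<Longrightarrow> integral {s..t} k0 \<le> 1/2"
    using small_integral[OF k0, of "1/2"] by auto
  define G where "G = (\<lambda>x::real. (x + 1/2) / (1 + 1/2 * x))"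
  define R where "R n = (G ^^ n) (max r 0)" for n
  have RSuc: "R (Suc n) = G (R n)" for n by (simp add: R_def)
  have R01: "0 \<le> R n \<and> R n < 1" for n
  proof (induction n)
    case 0 then show ?case using r by (simp add: R_def)
  next
    case (Suc n)
    have "G (R n) < 1" unfolding G_def using frac_lt1[of "R n" "1/2"] Suc by (simp add: mult.commute)
    moreover have "G (R n) \<ge> 0" unfolding G_def using Suc by simp
    ultimately show ?case by (simp add: RSuc)
  qed
  have claim: "\<forall>s t (z::complex). 0 \<le> s \<longrightarrow> s \<le> t \<longrightarrow> t \<le> T \<longrightarrow> t - s \<le> real n * \<delta> \<longrightarrow> norm z \<le> r \<longrightarrow> norm (\<phi> s t z) \<le> R n" for n
  proof (induction n)
    case 0
    show ?case
    proof (intro allI impI)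
      fix s t and z :: complex assume a: "0 \<le> s" "s \<le> t" "t \<le> T" "t - s \<le> real 0 * \<delta>" "norm z \<le> r"
      then have "t = s" by simp
      moreover have "z \<in> ball 0 1" using a r by simp
      ultimately have "\<phi> s t z = z" using E2 a by simp
      then show "norm (\<phi> s t z) \<le> R 0" using a by (simp add: R_def)
    qed
  next
    case (Suc n)
    show ?case
    proof (intro allI impI)
      fix s t and z :: complex assume a: "0 \<le> s" "s \<le> t" "t \<le> T" "t - s \<le> real (Suc n) * \<delta>" "norm z \<le> r"
      define u where "u = max s (t - \<delta>)"
      have u: "s \<le> u" "u \<le> t" "t - u \<le> \<delta>" "u - s \<le> real n * \<delta>"
        using a \<delta> by (auto simp: u_def algebra_simps)
      have z1: "z \<in> ball 0 1" using a r by simp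
      define w where "w = \<phi> s u z"
      have wR: "norm w \<le> R n" using Suc.IH a u unfolding w_def by auto
      have w1: "norm w < 1" using wR R01[of n] by simp
      have "\<phi> s t z = \<phi> u t w" using E3[OF a(1) u(1,2) z1] by (simp add: w_def)
      have hol: "\<phi> u t holomorphic_on ball 0 1" "\<phi> u t ` ball 0 1 \<subseteq> ball 0 1" using E1[of u t] a u by auto
      define c where "c = norm (\<phi> u t 0)"
      have c12: "c \<le> 1/2" unfolding c_def using b0[of u t] sm[of u t] a u by simp
      have c0: "0 \<le> c" by (simp add: c_def)
      have "norm (\<phi> s t z) \<le> (norm w + c) / (1 + c * norm w)"
        using growth[OF hol w1] \<open>\<phi> s t z = \<phi> u t w\<close> by (simp add: c_def)
      also have "\<dots> \<le> (R n + c) / (1 + c * R n)"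
        by (rule frac_mono) (use wR c0 c12 in auto)
      also have "\<dots> = (c + R n) / (1 + R n * c)" by (simp add: add.commute mult.commute)
      also have "\<dots> \<le> (1/2 + R n) / (1 + R n * (1/2))"
        by (rule frac_mono) (use c0 c12 R01[of n] in auto)
      also have "\<dots> = R (Suc n)" by (simp add: RSuc G_def add.commute mult.commute)
      finally show "norm (\<phi> s t z) \<le> R (Suc n)" .
    qed
  qed
  define N where "N = nat \<lceil>T / \<delta>\<rceil>"
  have TN: "T \<le> real N * \<delta>"
  proof -
    have "T / \<delta> \<le> real N" unfolding N_def by linarith
    then show ?thesis using \<delta> by (simp add: divide_le_eq)
  qed
  show ?thesis
  proof (rule that[of "R N"])
    show "R N < 1" using R01 by blast
    fix s t and z :: complex assume a: "0 \<le> s" "s \<le> t" "t \<le> T" "norm z \<le> r"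
    have "t - s \<le> real N * \<delta>" using a TN by linarith
    then show "norm (\<phi> s t z) \<le> R N" using claim[of N] a by blast
  qed
qed

lemma holo_lip:
  assumes f: "f holomorphic_on ball 0 1" and R: "R < 1"
  obtains L where "L \<ge> 0" "\<And>x y. norm x \<le> R \<Longrightarrow> norm y \<le> R \<Longrightarrow> norm (f x - f y) \<le> L * norm (x - y)"
proof -
  have sub: "cball 0 R \<subseteq> ball (0::complex) 1" using R by auto
  have "deriv f holomorphic_on ball 0 1" by (rule holomorphic_deriv[OF f]) simp
  then have "continuous_on (cball 0 R) (deriv f)"
    using holomorphic_on_imp_continuous_on holomorphic_on_subset sub by blast
  then have "compact (deriv f ` cball 0 R)" by (intro compact_continuous_image) auto
  then obtain B where B: "\<And>z. z \<in> cball 0 R \<Longrightarrow> norm (deriv f z) \<le> B"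
    using compact_imp_bounded bounded_iff by (metis imageI)
  show ?thesis
  proof (rule that[of "max B 0"])
    show "max B 0 \<ge> 0" by simp
    fix x y :: complex assume xy: "norm x \<le> R" "norm y \<le> R"
    show "norm (f x - f y) \<le> max B 0 * norm (x - y)"
    proof (rule field_differentiable_bound[where S="cball 0 R"])
      show "convex (cball (0::complex) R)" by simp
      show "(f has_field_derivative deriv f z) (at z within cball 0 R)" if "z \<in> cball 0 R" for z
        by (rule holomorphic_derivI[OF f]) (use that sub in auto)
      show "norm (deriv f z) \<le> max B 0" if "z \<in> cball 0 R" for z
        using B[OF that] by simp
      show "x \<in> cball 0 R" "y \<in> cball 0 R" using xy by auto
    qed
  qed
qed



theorem lemma3p2:
  fixes d :: ereal
    and \<phi> :: "real \<Rightarrow> real \<Rightarrow> complex \<Rightarrow> complex"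
    and f :: "real \<Rightarrow> complex \<Rightarrow> complex"
  assumes "1 \<le> d"
    and "evolution_family d \<phi>"
    and "\<And>t. 0 \<le> t \<Longrightarrow> f t holomorphic_on ball 0 1 \<and> inj_on (f t) (ball 0 1)"
    and "\<And>s t z. 0 \<le> s \<Longrightarrow> s \<le> t \<Longrightarrow> z \<in> ball 0 1 \<Longrightarrow> f t (\<phi> s t z) = f s z"
  shows "loewner_chain d f"
proof -
  note d = assms(1)
  note univ = assms(3)
  note sub = assms(4)
  note EF = assms(2)[unfolded evolution_family_def]
  have E1: "\<And>s t. 0 \<le> s \<Longrightarrow> s \<le> t \<Longrightarrow> \<phi> s t holomorphic_on ball 0 1 \<and> \<phi> s t ` ball 0 1 \<subseteq> ball 0 1"
    using EF[THEN conjunct1] by blast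
  have E2: "\<And>s z. 0 \<le> s \<Longrightarrow> z \<in> ball 0 1 \<Longrightarrow> \<phi> s s z = z"
    using EF[THEN conjunct2, THEN conjunct1] by blast
  have E3: "\<And>s u t z. 0 \<le> s \<Longrightarrow> s \<le> u \<Longrightarrow> u \<le> t \<Longrightarrow> z \<in> ball 0 1 \<Longrightarrow> \<phi> s t z = \<phi> u t (\<phi> s u z)"
    using EF[THEN conjunct2, THEN conjunct2, THEN conjunct1] by blast
  have E4: "\<And>z T. z \<in> ball 0 1 \<Longrightarrow> T > 0 \<Longrightarrow> \<exists>k. (\<forall>x. 0 \<le> k x) \<and> Lp_on d T k \<and>
        (\<forall>s u t. 0 \<le> s \<longrightarrow> s \<le> u \<longrightarrow> u \<le> t \<longrightarrow> t \<le> T \<longrightarrow>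
           cmod (\<phi> s u z - \<phi> s t z) \<le> integral {u..t} k)"
    using EF[THEN conjunct2, THEN conjunct2, THEN conjunct2] by blast
  have L3: "\<exists>k. (\<forall>x. 0 \<le> k x) \<and> Lp_on d T k \<and>
          (\<forall>z\<in>K. \<forall>s t. 0 \<le> s \<longrightarrow> s \<le> t \<longrightarrow> t \<le> T \<longrightarrow>
             cmod (f s z - f t z) \<le> integral {s..t} k)"
    if K: "compact K" "K \<subseteq> ball 0 1" and T: "T > 0" for K T
  proof -
    obtain r where r: "r < 1" "\<And>z. z \<in> K \<Longrightarrow> norm z \<le> r"
    proof (cases "K = {}")
      case True then show ?thesis using that[of 0] by auto
    next
      case False
      have "compact (norm ` K)" using K(1) by (intro compact_continuous_image continuous_intros)
      then obtain m where m: "m \<in> norm ` K" "\<And>y. y \<in> norm ` K \<Longrightarrow> y \<le> m"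
        using False compact_attains_sup[of "norm ` K"] by blast
      then obtain z0 where "z0 \<in> K" "m = norm z0" by blast
      then have "m < 1" using K(2) by auto
      then show ?thesis using that[of m] m by auto
    qed
    obtain C where C0: "C \<ge> 0" and C: "\<And>g z. g holomorphic_on ball 0 1 \<Longrightarrow> g ` ball 0 1 \<subseteq> ball 0 1 \<Longrightarrow>
     norm z \<le> r \<Longrightarrow> norm (g z - z) \<le> C * (norm (g 0) + norm (g (1/2) - 1/2))"
      using nearid[OF r(1)] by blast
    have b1: "(0::complex) \<in> ball 0 1" "(1/2::complex) \<in> ball 0 1" by auto
    obtain k0 where k0: "\<forall>x. 0 \<le> k0 x" "Lp_on d T k0"
      "\<And>s u t. 0 \<le> s \<Longrightarrow> s \<le> u \<Longrightarrow> u \<le> t \<Longrightarrow> t \<le> T \<Longrightarrow> cmod (\<phi> s u 0 - \<phi> s t 0) \<le> integral {u..t} k0"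
      using E4[OF b1(1) T] by blast
    obtain kb where kb: "\<forall>x. 0 \<le> kb x" "Lp_on d T kb"
      "\<And>s u t. 0 \<le> s \<Longrightarrow> s \<le> u \<Longrightarrow> u \<le> t \<Longrightarrow> t \<le> T \<Longrightarrow> cmod (\<phi> s u (1/2) - \<phi> s t (1/2)) \<le> integral {u..t} kb"
      using E4[OF b1(2) T] by blast
    have k0i: "k0 integrable_on {0..T}" by (rule Lp_integrable_on[OF k0(2) d])
    have kbi: "kb integrable_on {0..T}" by (rule Lp_integrable_on[OF kb(2) d])
    have b0: "norm (\<phi> s t 0) \<le> integral {s..t} k0" if "0 \<le> s" "s \<le> t" "t \<le> T" for s t
      using k0(3)[of s s t] that E2[OF that(1) b1(1)] by simp
    have bb: "norm (\<phi> s t (1/2) - 1/2) \<le> integral {s..t} kb" if "0 \<le> s" "s \<le> t" "t \<le> T" for s t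
      using kb(3)[of s s t] that E2[OF that(1) b1(2)] by (simp add: norm_minus_commute)
    obtain R1 where R1: "R1 < 1" "\<And>s t z. 0 \<le> s \<Longrightarrow> s \<le> t \<Longrightarrow> t \<le> T \<Longrightarrow> norm z \<le> r \<Longrightarrow> norm (\<phi> s t z) \<le> R1"
      using uniform_radius[OF E1 E2 E3 k0i b0 r(1)] by blast
    define \<rho> where "\<rho> = max r R1"
    have \<rho>1: "\<rho> < 1" using r R1 by (simp add: \<rho>_def)
    obtain R2 where R2: "R2 < 1" "\<And>s t z. 0 \<le> s \<Longrightarrow> s \<le> t \<Longrightarrow> t \<le> T \<Longrightarrow> norm z \<le> \<rho> \<Longrightarrow> norm (\<phi> s t z) \<le> R2"
      using uniform_radius[OF E1 E2 E3 k0i b0 \<rho>1] by blast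
    have holT: "f T holomorphic_on ball 0 1" using univ[of T] T by simp
    obtain L2 where L20: "L2 \<ge> 0" and L2: "\<And>x y. norm x \<le> R2 \<Longrightarrow> norm y \<le> R2 \<Longrightarrow> norm (f T x - f T y) \<le> L2 * norm (x - y)"
      using holo_lip[OF holT R2(1)] by blast
    define L where "L = L2 * (2 / (1 - \<rho>))"
    have L0: "L \<ge> 0" using L20 \<rho>1 by (simp add: L_def)
    have Lip: "norm (f t x - f t y) \<le> L * norm (x - y)"
      if t: "0 \<le> t" "t \<le> T" and xy: "norm x \<le> \<rho>" "norm y \<le> \<rho>" for t x y
    proof -
      have x1: "x \<in> ball 0 1" "y \<in> ball 0 1" using xy \<rho>1 by auto
      have fx: "f t x = f T (\<phi> t T x)" "f t y = f T (\<phi> t T y)" using sub[OF t(1) t(2)] x1 by auto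
      have hol: "\<phi> t T holomorphic_on ball 0 1" "\<phi> t T ` ball 0 1 \<subseteq> ball 0 1" using E1[OF t] by auto
      have "norm (f t x - f t y) \<le> L2 * norm (\<phi> t T x - \<phi> t T y)"
        unfolding fx by (rule L2) (use R2(2)[OF t(1) t(2) order_refl] xy in auto)
      also have "\<dots> \<le> L2 * (2 * norm (x - y) / (1 - \<rho>))"
        by (rule mult_left_mono[OF lip[OF hol xy \<rho>1] L20])
      also have "\<dots> = L * norm (x - y)" by (simp add: L_def)
      finally show ?thesis .
    qed
    define k where "k = (\<lambda>x. (L * C) * (k0 x + kb x))"
    show ?thesis
    proof (intro exI conjI allI ballI impI)
      show "0 \<le> k x" for x unfolding k_def using k0(1) kb(1) L0 C0 by simp
      show "Lp_on d T k" unfolding k_def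
        by (rule Lp_comb[OF k0(2) kb(2) d]) (use k0(1) kb(1) L0 C0 in auto)
      fix z s t assume z: "z \<in> K" and st: "0 \<le> s" "s \<le> t" "t \<le> T"
      have zr: "norm z \<le> r" using r(2)[OF z] .
      have z1: "z \<in> ball 0 1" using K(2) z by auto
      define w where "w = \<phi> s t z"
      have fs: "f s z = f t w" using sub[OF st(1,2) z1] by (simp add: w_def)
      have wR: "norm w \<le> \<rho>" using R1(2)[OF st zr] by (simp add: w_def \<rho>_def)
      have zR: "norm z \<le> \<rho>" using zr by (simp add: \<rho>_def)
      have hol: "\<phi> s t holomorphic_on ball 0 1" "\<phi> s t ` ball 0 1 \<subseteq> ball 0 1" using E1[OF st(1,2)] by auto
      have i0: "k0 integrable_on {s..t}" by (rule integrable_on_subinterval[OF k0i]) (use st in auto)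
      have ib: "kb integrable_on {s..t}" by (rule integrable_on_subinterval[OF kbi]) (use st in auto)
      have "norm (f s z - f t z) \<le> L * norm (w - z)"
        unfolding fs using Lip[OF order_trans[OF st(1,2)] st(3) wR zR] .
      also have "\<dots> \<le> L * (C * (norm (\<phi> s t 0) + norm (\<phi> s t (1/2) - 1/2)))"
        by (rule mult_left_mono[OF _ L0]) (unfold w_def, rule C[OF hol zr])
      also have "\<dots> \<le> L * (C * (integral {s..t} k0 + integral {s..t} kb))"
      proof -
        have "norm (\<phi> s t 0) + norm (\<phi> s t (1/2) - 1/2) \<le> integral {s..t} k0 + integral {s..t} kb"
          using b0[OF st] bb[OF st] by linarith
        then have "C * (norm (\<phi> s t 0) + norm (\<phi> s t (1/2) - 1/2)) \<le> C * (integral {s..t} k0 + integral {s..t} kb)"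
          by (rule mult_left_mono) (rule C0)
        then show ?thesis by (rule mult_left_mono) (rule L0)
      qed
      also have "\<dots> = integral {s..t} k"
        unfolding k_def using i0 ib by (simp add: integral_add)
      finally show "norm (f s z - f t z) \<le> integral {s..t} k" .
    qed
  qed
  show ?thesis
    unfolding loewner_chain_def
  proof (intro conjI)
    show "\<forall>t\<ge>0. f t holomorphic_on ball 0 1 \<and> inj_on (f t) (ball 0 1)"
      using univ by blast
    show "\<forall>s t. 0 \<le> s \<longrightarrow> s < t \<longrightarrow> f s ` ball 0 1 \<subseteq> f t ` ball 0 1"
    proof (intro allI impI subsetI)
      fix s t y assume that: "0 \<le> s" "s < t" and "y \<in> f s ` ball 0 1"
      then obtain z where z: "z \<in> ball 0 1" "y = f s z" by blast
      have "\<phi> s t ` ball 0 1 \<subseteq> ball 0 1" using E1[of s t] that by auto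
      then have "\<phi> s t z \<in> ball 0 1" using z(1) by blast
      moreover have "y = f t (\<phi> s t z)" using sub[of s t z] that z by simp
      ultimately show "y \<in> f t ` ball 0 1" by blast
    qed
    show "\<forall>K T. compact K \<longrightarrow> K \<subseteq> ball 0 1 \<longrightarrow> T > 0 \<longrightarrow> (\<exists>k. (\<forall>x. 0 \<le> k x) \<and> Lp_on d T k \<and>
          (\<forall>z\<in>K. \<forall>s t. 0 \<le> s \<longrightarrow> s \<le> t \<longrightarrow> t \<le> T \<longrightarrow>
             cmod (f s z - f t z) \<le> integral {s..t} k))"
      using L3 by blast
  qed
qed


end
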